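(* Let $\{\gamma_k\}_{k=0}^{\infty}$ be a sequence of non-negative real numbers which is a non-trivial Legendre multiplier sequence. Then $\gamma_k \le \gamma_{k+1}$ for all $k \ge 0$. *)

theory Defs
  imports "HOL-Computational_Algebra.Polynomial" Complex_Main
begin

fun legendre :: "nat \<Rightarrow> real poly" where
  "legendre 0 = 1"
| "legendre (Suc 0) = [:0, 1:]"
| "legendre (Suc (Suc n)) =
     smult (1 / real (n + 2))
       (smult (real (2 * n + 3)) ([:0, 1:] * legendre (Suc n)) - smult (real (n + 1)) (legendre n))"

text \<open>A real polynomial has only real zeros (the zero polynomial is counted as such,
  following the standard convention of the multiplier-sequence literature).\<close>
definition real_rooted :: "real poly \<Rightarrow> bool" where
  "real_rooted p \<longleftrightarrow> p = 0 \<or> (\<forall>z::complex. poly (map_poly of_real p) z = 0 \<longrightarrow> z \<in> \<real>)"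

text \<open>Legendre multiplier sequence: the operator sum a_k P_k \<mapsto> sum gamma_k a_k P_k
  maps every real polynomial with only real zeros to one with only real zeros.
  (Every real polynomial has a unique expansion in the Legendre basis.)\<close>
definition legendre_multiplier_sequence :: "(nat \<Rightarrow> real) \<Rightarrow> bool" where
  "legendre_multiplier_sequence \<gamma> \<longleftrightarrow>
     (\<forall>n (a :: nat \<Rightarrow> real).
        real_rooted (\<Sum>k\<le>n. smult (a k) (legendre k)) \<longrightarrow>
        real_rooted (\<Sum>k\<le>n. smult (\<gamma> k * a k) (legendre k)))"

definition trivial_sequence :: "(nat \<Rightarrow> real) \<Rightarrow> bool" where
  "trivial_sequence \<gamma> \<longleftrightarrow> finite {k. \<gamma> k \<noteq> 0} \<and> card {k. \<gamma> k \<noteq> 0} \<le> 2"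

end

theory Submission
  imports Defs "HOL-Computational_Algebra.Fundamental_Theorem_Algebra"
begin

lemma map_of_real_mult:
  "map_poly (of_real :: real \<Rightarrow> complex) (p * q) = map_poly of_real p * map_poly of_real q"
  by (simp add: poly_eq_iff coeff_map_poly coeff_mult)

lemma poly_map_of_real: "poly (map_poly (of_real :: real \<Rightarrow> complex) p) (of_real x) = of_real (poly p x)"
  by (induction p) (auto simp: map_poly_pCons)

lemma coeff_X_mult: "coeff ([:0,1:] * (p :: real poly)) i = (if i = 0 then 0 else coeff p (i - 1))"
  by (cases i) (auto simp: mult_pCons_left coeff_pCons)

lemma legendre_Suc_Suc_coeff:
  "coeff (legendre (Suc (Suc n))) i =
     (real (2*n+3) * (if i = 0 then 0 else coeff (legendre (Suc n)) (i - 1)) - real (n+1) * coeff (legendre n) i) / real (n+2)"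
  by (cases i) (simp_all add: coeff_X_mult field_simps)

declare legendre.simps(3)[simp del]

lemma legendre_basic:
  "degree (legendre n) = n \<and> coeff (legendre n) n > 0 \<and> (n \<ge> 1 \<longrightarrow> coeff (legendre n) (n-1) = 0)
    \<and> (n \<ge> 2 \<longrightarrow> coeff (legendre n) (n-2) < 0)"
proof (induction n rule: legendre.induct)
  case 1 then show ?case by simp
next
  case 2 then show ?case by simp
next
  case (3 n)
  have d1: "degree (legendre (Suc n)) = Suc n" and d0: "degree (legendre n) = n"
    using 3 by auto
  have z1: "coeff (legendre n) (Suc n) = 0" "coeff (legendre n) (Suc (Suc n)) = 0"
    using d0 by (auto intro: coeff_eq_0)
  have z2: "coeff (legendre (Suc n)) (Suc (Suc n)) = 0" 
    using d1 by (auto intro: coeff_eq_0)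
  have k1: "coeff (legendre (Suc n)) (Suc n) > 0" "coeff (legendre n) n > 0" using 3 by auto
  have c1: "coeff (legendre (Suc n)) n = 0" using 3 by auto
  have c2: "(if n = 0 then 0 else coeff (legendre (Suc n)) (n - 1)) \<le> 0"
    using 3 by (cases n) auto
  have top: "coeff (legendre (Suc (Suc n))) (Suc (Suc n)) > 0"
    unfolding legendre_Suc_Suc_coeff using k1 z1 apply (simp add: field_simps)
    by (smt (verit) mult_nonneg_nonneg of_nat_0_le_iff)
  have hi: "\<And>i. i > Suc (Suc n) \<Longrightarrow> coeff (legendre (Suc (Suc n))) i = 0"
    unfolding legendre_Suc_Suc_coeff using d0 d1
    by (auto simp: coeff_eq_0)
  have deg: "degree (legendre (Suc (Suc n))) = Suc (Suc n)"
    proof (rule order.antisym)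
    show "degree (legendre (Suc (Suc n))) \<le> Suc (Suc n)" using hi by (intro degree_le) auto
    show "Suc (Suc n) \<le> degree (legendre (Suc (Suc n)))" using top by (intro le_degree) auto
  qed
  have s1: "coeff (legendre (Suc (Suc n))) (Suc n) = 0"
    unfolding legendre_Suc_Suc_coeff using c1 z1 by simp
  have s2: "coeff (legendre (Suc (Suc n))) n < 0"
  proof -
    let ?c = "(if n = 0 then 0 else coeff (legendre (Suc n)) (n - 1))"
    have "real (2*n+3) * ?c \<le> 0" using c2 by (intro mult_nonneg_nonpos) auto
    moreover have "real (n+1) * coeff (legendre n) n > 0" using k1 by simp
    ultimately have "real (2*n+3) * ?c - real (n+1) * coeff (legendre n) n < 0" by linarith
    moreover have "coeff (legendre (Suc (Suc n))) n = (real (2*n+3) * ?c - real (n+1) * coeff (legendre n) n) / real (n+2)"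
      by (cases n) (simp_all add: legendre_Suc_Suc_coeff)
    ultimately show ?thesis by (simp add: divide_neg_pos)
  qed
  show ?case using deg top s1 s2 by simp
qed

abbreviation "kap n \<equiv> coeff (legendre n) n"

lemma kap_pos: "kap n > 0" using legendre_basic by blast
lemma deg_leg[simp]: "degree (legendre n) = n" using legendre_basic by blast
lemma coeff_leg_hi: "i > n \<Longrightarrow> coeff (legendre n) i = 0"
  by (rule coeff_eq_0) simp
lemma coeff_leg_1: "coeff (legendre (Suc n)) n = 0" using legendre_basic[of "Suc n"] by simp
lemma coeff_leg_2: "coeff (legendre (Suc (Suc n))) n < 0" using legendre_basic[of "Suc (Suc n)"] by simp

lemma legendre_Suc_Suc_poly:
  "poly (legendre (Suc (Suc n))) x =
     (real (2*n+3) * x * poly (legendre (Suc n)) x - real (n+1) * poly (legendre n) x) / real (n+2)"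
  by (simp add: legendre.simps(3) field_simps)

lemma legendre_pm1: "poly (legendre n) 1 = 1 \<and> poly (legendre n) (-1) = (-1)^n"
proof (induction n rule: legendre.induct)
  case (3 n)
  then show ?case unfolding legendre_Suc_Suc_poly by (simp add: field_simps)
qed auto

lemma legendre_span:
  assumes "degree p \<le> n"
  shows "\<exists>a. p = (\<Sum>k\<le>n. smult (a k) (legendre k))"
  using assms
proof (induction n arbitrary: p)
  case 0
  then have "p = [:coeff p 0:]" by (metis degree_0_id le_zero_eq)
  moreover have "{..0::nat} = {0}" by auto
  ultimately have "p = (\<Sum>k\<le>0. smult (coeff p 0) (legendre k))"
    by (metis (no_types, lifting) legendre.simps(1) mult.right_neutral one_pCons smult_0_right smult_pCons sum.insert finite.emptyI empty_iff sum.empty add.right_neutral)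
  then show ?case by (intro exI[of _ "\<lambda>_. coeff p 0"])
next
  case (Suc n)
  define c where "c = coeff p (Suc n) / kap (Suc n)"
  define p' where "p' = p - smult c (legendre (Suc n))"
  have "degree p' \<le> n"
  proof (rule degree_le, intro allI impI)
    fix i assume "n < i"
    show "coeff p' i = 0"
    proof (cases "i = Suc n")
      case True
      then show ?thesis unfolding p'_def c_def using kap_pos[of "Suc n"] by simp
    next
      case False
      with \<open>n < i\<close> have "i > Suc n" by simp
      then show ?thesis unfolding p'_def using Suc.prems
        by (simp add: coeff_eq_0 coeff_leg_hi)
    qed
  qed
  then obtain a where a: "p' = (\<Sum>k\<le>n. smult (a k) (legendre k))" using Suc.IH by blast
  define a' where "a' = a(Suc n := c)"
  have "(\<Sum>k\<le>Suc n. smult (a' k) (legendre k)) = (\<Sum>k\<le>n. smult (a k) (legendre k)) + smult c (legendre (Suc n))"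
    unfolding a'_def by (simp add: atMost_Suc add.commute)
  also have "\<dots> = p" using a unfolding p'_def by simp
  finally show ?case by metis
qed

lemma coeff_sum_top3:
  fixes b :: "nat \<Rightarrow> real" and m :: nat
  defines "q \<equiv> (\<Sum>k\<le>Suc (Suc m). smult (b k) (legendre k))"
  shows "coeff q (Suc (Suc m)) = b (Suc (Suc m)) * kap (Suc (Suc m))"
    and "coeff q (Suc m) = b (Suc m) * kap (Suc m)"
    and "coeff q m = b m * kap m + b (Suc (Suc m)) * coeff (legendre (Suc (Suc m))) m"
    and "degree q \<le> Suc (Suc m)"
proof -
  have split: "{..Suc (Suc m)} = insert (Suc (Suc m)) (insert (Suc m) (insert m {..<m}))"
    by auto
  have low: "\<And>i. i \<ge> m \<Longrightarrow> (\<Sum>k<m. b k * coeff (legendre k) i) = 0"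
    by (intro sum.neutral) (auto simp: coeff_leg_hi)
  have cq: "\<And>i. coeff q i = b (Suc (Suc m)) * coeff (legendre (Suc (Suc m))) i + b (Suc m) * coeff (legendre (Suc m)) i
      + b m * coeff (legendre m) i + (\<Sum>k<m. b k * coeff (legendre k) i)"
    unfolding q_def split by (simp add: coeff_sum add.assoc)
  show "coeff q (Suc (Suc m)) = b (Suc (Suc m)) * kap (Suc (Suc m))"
    unfolding cq using low[of "Suc (Suc m)"] by (simp add: coeff_leg_hi)
  show "coeff q (Suc m) = b (Suc m) * kap (Suc m)"
    unfolding cq using low[of "Suc m"] by (simp add: coeff_leg_hi coeff_leg_1)
  show "coeff q m = b m * kap m + b (Suc (Suc m)) * coeff (legendre (Suc (Suc m))) m"
    unfolding cq using low[of "m"] by (simp add: coeff_leg_hi coeff_leg_1)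
  show "degree q \<le> Suc (Suc m)" unfolding q_def
    by (intro degree_sum_le) (auto intro: order.trans[OF degree_smult_le])
qed


section \<open>Real-rootedness utilities\<close>

lemma map_of_real_smult:
  "map_poly (of_real :: real \<Rightarrow> complex) (smult c p) = smult (of_real c) (map_poly of_real p)"
  by (simp add: poly_eq_iff coeff_map_poly)

lemma map_of_real_eq_0: "map_poly (of_real :: real \<Rightarrow> complex) p = 0 \<longleftrightarrow> p = 0"
  by (simp add: map_poly_eq_0_iff)

lemma rr_smult:
  assumes "c \<noteq> 0" "real_rooted (smult c p)" shows "real_rooted p"
  using assms unfolding real_rooted_def map_of_real_smult by auto

lemma rr_lin:
  assumes "real_rooted s" shows "real_rooted ([:-r,1:] * s)"
proof -
  have m: "map_poly (of_real :: real \<Rightarrow> complex) [:-r,1:] = [:-of_real r, 1:]"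
    by (simp add: map_poly_pCons)
  show ?thesis using assms unfolding real_rooted_def map_of_real_mult m
    by (auto simp: algebra_simps)
qed

lemma rr_one: "real_rooted 1"
  unfolding real_rooted_def by simp

lemma rr_lin_pow: "real_rooted ([:-r,1:] ^ n)"
proof (induction n)
  case (Suc n) then show ?case unfolding power_Suc by (rule rr_lin)
qed (simp add: rr_one)

lemma rr_factor:
  assumes "real_rooted q" "degree q = Suc d"
  shows "\<exists>r s. q = [:-r,1:] * s \<and> real_rooted s \<and> s \<noteq> 0 \<and> degree s = d"
proof -
  let ?Q = "map_poly (of_real :: real \<Rightarrow> complex) q"
  have q0: "q \<noteq> 0" using assms(2) by auto
  have "degree ?Q = Suc d" using assms(2) by (simp add: degree_map_poly)
  then have "\<not> constant (poly ?Q)" by (simp add: constant_degree)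
  then obtain z where z: "poly ?Q z = 0" using fundamental_theorem_of_algebra by blast
  have "z \<in> \<real>" using assms(1) q0 z unfolding real_rooted_def by blast
  then obtain r where zr: "z = of_real r" by (auto elim: Reals_cases)
  have "poly q r = 0" using z unfolding zr poly_map_of_real by simp
  then obtain s where qs: "q = [:-r,1:] * s" using poly_eq_0_iff_dvd by (metis dvdE)
  have s0: "s \<noteq> 0" using q0 qs by auto
  have "degree q = 1 + degree s" unfolding qs using s0 by (subst degree_mult_eq) auto
  then have ds: "degree s = d" using assms(2) by simp
  have "real_rooted s" unfolding real_rooted_def
  proof (intro disjI2 allI impI)
    fix w assume "poly (map_poly of_real s) w = (0::complex)"
    then have "poly ?Q w = 0" unfolding qs map_of_real_mult by simp
    then show "w \<in> \<real>" using assms(1) q0 unfolding real_rooted_def by blast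
  qed
  then show ?thesis using qs s0 ds by blast
qed

definition t1 :: "real poly \<Rightarrow> real" where
  "t1 q = (if degree q \<ge> 1 then coeff q (degree q - 1) else 0)"
definition t2 :: "real poly \<Rightarrow> real" where
  "t2 q = (if degree q \<ge> 2 then coeff q (degree q - 2) else 0)"
definition Qv :: "real poly \<Rightarrow> real" where
  "Qv q = (t1 q ^ 2 - 2 * lead_coeff q * t2 q) / lead_coeff q ^ 2"

lemma coeff_lin_mult:
  "coeff ([:-r,1:] * (s::real poly)) i = (if i = 0 then 0 else coeff s (i - 1)) - r * coeff s i"
  by (cases i) (simp_all add: mult_pCons_left coeff_pCons)

lemma newton_bound:
  assumes "real_rooted q" "q \<noteq> 0"
  shows "(real (degree q) - 1) * t1 q ^ 2 \<ge> 2 * real (degree q) * lead_coeff q * t2 q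
    \<and> Qv q \<ge> 0
    \<and> (\<forall>i. \<bar>coeff q i\<bar> \<le> \<bar>lead_coeff q\<bar> * (1 + sqrt (Qv q)) ^ degree q)"
  using assms
proof (induction "degree q" arbitrary: q)
  case 0
  then have "t1 q = 0" "t2 q = 0" by (auto simp: t1_def t2_def)
  moreover have "\<And>i. \<bar>coeff q i\<bar> \<le> \<bar>lead_coeff q\<bar>"
    using 0 by (case_tac i) (auto simp: coeff_eq_0)
  ultimately show ?case using 0 by (simp add: Qv_def)
next
  case (Suc d)
  obtain r s where qs: "q = [:-r,1:] * s" and rs: "real_rooted s" and s0: "s \<noteq> 0"
    and ds: "degree s = d"
    using rr_factor[OF Suc.prems(1) Suc.hyps(2)[symmetric]] by blast
  have IH: "(real d - 1) * t1 s ^ 2 \<ge> 2 * real d * lead_coeff s * t2 s"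
     "Qv s \<ge> 0" "\<And>i. \<bar>coeff s i\<bar> \<le> \<bar>lead_coeff s\<bar> * (1 + sqrt (Qv s)) ^ d"
    using Suc.hyps(1)[OF ds[symmetric] rs s0] ds by simp_all
  define L where "L = lead_coeff s"
  have L0: "L \<noteq> 0" using s0 by (simp add: L_def)
  have dq: "degree q = Suc d" using Suc.hyps(2) by simp
  have cq: "\<And>i. coeff q i = (if i = 0 then 0 else coeff s (i - 1)) - r * coeff s i"
    unfolding qs by (rule coeff_lin_mult)
  have Lq: "lead_coeff q = L" using ds unfolding dq cq L_def
    by (simp add: coeff_eq_0)
  have T1: "t1 q = t1 s - r * L"
    unfolding t1_def dq cq using ds by (auto simp: L_def)
  have T2: "t2 q = t2 s - r * t1 s"
    unfolding t2_def t1_def dq cq using ds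
    by (cases d) (auto simp: numeral_2_eq_2)
  have d0: "d = 0 \<Longrightarrow> t1 s = 0 \<and> t2 s = 0" using ds by (simp add: t1_def t2_def)
  have N: "real d * (t1 s - r * L)^2 \<ge> 2 * real (Suc d) * L * (t2 s - r * t1 s)"
  proof (cases "d = 0")
    case True then show ?thesis using d0 by simp
  next
    case False
    then have dp: "real d > 0" by simp
    have key: "real d * (real d * (t1 s - r * L)^2 - 2 * real (Suc d) * L * (t2 s - r * t1 s))
      = (t1 s + real d * r * L)^2 + real (Suc d) * ((real d - 1) * t1 s ^ 2 - 2 * real d * L * t2 s)"
      by (simp add: algebra_simps power2_eq_square)
    have "(t1 s + real d * r * L)^2 + real (Suc d) * ((real d - 1) * t1 s ^ 2 - 2 * real d * L * t2 s) \<ge> 0"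
      using IH(1) unfolding L_def by (intro add_nonneg_nonneg mult_nonneg_nonneg) auto
    then have "real d * (real d * (t1 s - r * L)^2 - 2 * real (Suc d) * L * (t2 s - r * t1 s)) \<ge> 0"
      using key by simp
    then show ?thesis using dp by (simp add: zero_le_mult_iff)
  qed
  have QQ: "Qv q = Qv s + r^2"
    unfolding Qv_def Lq T1 T2 using L0 by (simp add: L_def field_simps power2_eq_square)
  have Qq: "Qv q \<ge> 0" using QQ IH(2) by simp
  have rb: "\<bar>r\<bar> \<le> sqrt (Qv q)"
  proof -
    have "sqrt (r^2) \<le> sqrt (Qv s + r^2)" using IH(2) by (intro real_sqrt_le_mono) simp
    then show ?thesis using QQ by simp
  qed
  have sb: "sqrt (Qv s) \<le> sqrt (Qv q)" unfolding QQ by simp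
  have B: "\<bar>coeff q i\<bar> \<le> \<bar>L\<bar> * (1 + sqrt (Qv q)) ^ Suc d" for i
  proof -
    let ?B = "\<bar>L\<bar> * (1 + sqrt (Qv s)) ^ d"
    have b1: "\<bar>(if i = 0 then 0 else coeff s (i - 1))\<bar> \<le> ?B"
      using IH(3)[of "i-1"] by (auto simp: L_def)
    have b2: "\<bar>r * coeff s i\<bar> \<le> \<bar>r\<bar> * ?B"
      using IH(3)[of i] by (simp add: abs_mult L_def mult_left_mono)
    have "\<bar>coeff q i\<bar> \<le> \<bar>(if i = 0 then 0 else coeff s (i - 1))\<bar> + \<bar>r * coeff s i\<bar>"
      unfolding cq by (rule abs_triangle_ineq4)
    also have "\<dots> \<le> ?B + \<bar>r\<bar> * ?B" using b1 b2 by linarith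
    also have "\<dots> = (1 + \<bar>r\<bar>) * ?B" by (simp add: algebra_simps)
    finally have "\<bar>coeff q i\<bar> \<le> (1 + \<bar>r\<bar>) * ?B" .
    also have "\<dots> \<le> (1 + sqrt (Qv q)) * (\<bar>L\<bar> * (1 + sqrt (Qv q)) ^ d)"
      using rb sb IH(2)
      by (intro mult_mono mult_left_mono power_mono) auto
    finally show ?thesis by (simp add: algebra_simps)
  qed
  show ?case
  proof (intro conjI allI)
    show "(real (degree q) - 1) * t1 q ^ 2 \<ge> 2 * real (degree q) * lead_coeff q * t2 q"
      using N unfolding Lq unfolding dq T1 T2 by simp
    show "Qv q \<ge> 0" by (fact Qq)
    fix i show "\<bar>coeff q i\<bar> \<le> \<bar>lead_coeff q\<bar> * (1 + sqrt (Qv q)) ^ degree q"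
      using B[of i] unfolding Lq unfolding dq .
  qed
qed


section \<open>Sign alternation\<close>

lemma chain_mono:
  fixes f :: "nat \<Rightarrow> real"
  assumes "\<forall>i. Suc i \<le> N \<longrightarrow> f i < f (Suc i)" "i < j" "j \<le> N"
  shows "f i < f j"
  using assms(2,3)
proof (induction j)
  case 0 then show ?case by simp
next
  case (Suc j)
  show ?case
  proof (cases "i = j")
    case True then show ?thesis using assms(1) Suc.prems by auto
  next
    case False
    then have "f i < f j" using Suc by auto
    also have "f j < f (Suc j)" using assms(1) Suc.prems by auto
    finally show ?thesis .
  qed
qed

lemma alt_rr:
  assumes "degree q = N" "\<forall>i. Suc i \<le> N \<longrightarrow> z i < z (Suc i)"
    "\<forall>i. Suc i \<le> N \<longrightarrow> poly q (z i) * poly q (z (Suc i)) < 0"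
  shows "real_rooted q"
proof (cases "q = 0")
  case True then show ?thesis by (simp add: real_rooted_def)
next
  case q0: False
  have "\<forall>i. \<exists>x. Suc i \<le> N \<longrightarrow> z i < x \<and> x < z (Suc i) \<and> poly q x = 0"
    using assms(2,3) poly_IVT by metis
  then obtain y where y: "\<And>i. Suc i \<le> N \<Longrightarrow> z i < y i \<and> y i < z (Suc i) \<and> poly q (y i) = 0"
    by metis
  have ymono: "y i < y j" if "i < j" "Suc j \<le> N" for i j
  proof -
    have "y i < z (Suc i)" using y that by auto
    also have "z (Suc i) \<le> z j"
      using chain_mono[OF assms(2), of "Suc i" j] that by (cases "Suc i = j") auto
    also have "z j < y j" using y that by auto
    finally show ?thesis .
  qed
  have inj: "inj_on (\<lambda>i. (of_real (y i) :: complex)) {..<N}"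
  proof (rule inj_onI)
    fix i j assume "i \<in> {..<N}" "j \<in> {..<N}" "(of_real (y i) :: complex) = of_real (y j)"
    then have "y i = y j" "Suc i \<le> N" "Suc j \<le> N" by auto
    then show "i = j" using ymono by (metis linorder_neq_iff less_irrefl)
  qed
  let ?Q = "map_poly (of_real :: real \<Rightarrow> complex) q"
  let ?Z = "{w. poly ?Q w = 0}"
  have Q0: "?Q \<noteq> 0" using q0 by (simp add: map_of_real_eq_0)
  have fin: "finite ?Z" using Q0 by (rule poly_roots_finite)
  have cZ: "card ?Z \<le> N" using card_poly_roots_bound[OF Q0] assms(1) by (simp add: degree_map_poly)
  have sub: "(\<lambda>i. of_real (y i)) ` {..<N} \<subseteq> ?Z"
    using y by (auto simp: poly_map_of_real)
  have cS: "card ((\<lambda>i. (of_real (y i) :: complex)) ` {..<N}) = N"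
    using card_image[OF inj] by simp
  have eq: "(\<lambda>i. of_real (y i)) ` {..<N} = ?Z"
    using card_subset_eq[OF fin sub] cS cZ card_mono[OF fin sub] by simp
  show ?thesis unfolding real_rooted_def
  proof (intro disjI2 allI impI)
    fix w assume "poly ?Q w = 0"
    then have "w \<in> ?Z" by simp
    then show "w \<in> \<real>" unfolding eq[symmetric] by auto
  qed
qed

lemma alt_from_sign:
  fixes f :: "nat \<Rightarrow> real"
  assumes "\<forall>i\<le>m. (-1)^(m-i) * f i > 0" "Suc i \<le> m"
  shows "f i * f (Suc i) < 0"
proof -
  have e: "(-1::real)^(m-i) = - ((-1)^(m - Suc i))"
    using assms(2) by (metis Suc_diff_Suc Suc_le_lessD mult_minus1 power_Suc)
  let ?s = "(-1::real)^(m - Suc i)"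
  have s2: "?s * ?s = 1" by (metis power_mult_distrib mult_minus1 power_one mult.commute neg_one_even_power
     power2_eq_square power_even_eq  even_two_times_div_two mult_2 left_minus_one_mult_self)
  have h: "(-1)^(m-i) * f i > 0" using assms(1) assms(2) by auto
  have a: "- ?s * f i > 0" using h unfolding e by simp
  have b: "?s * f (Suc i) > 0" using assms(1) assms(2) by auto
  have "(- ?s * f i) * (?s * f (Suc i)) > 0" by (rule mult_pos_pos[OF a b])
  then have "- (?s * ?s) * (f i * f (Suc i)) > 0" by (simp add: algebra_simps)
  then show ?thesis using s2 by simp
qed

lemma sign_prod:
  fixes y :: "nat \<Rightarrow> real"
  assumes "j \<le> n" "\<forall>i<j. y i < x" "\<forall>i. j \<le> i \<and> i < n \<longrightarrow> x < y i"
  shows "(-1)^(n-j) * (\<Prod>i<n. (x - y i)) > 0"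
  using assms
proof (induction n)
  case 0 then show ?case by simp
next
  case (Suc n)
  show ?case
  proof (cases "j = Suc n")
    case True
    then have "(\<Prod>i<Suc n. (x - y i)) > 0" using Suc.prems by (intro prod_pos) auto
    then show ?thesis using True by simp
  next
    case False
    then have jn: "j \<le> n" using Suc.prems by simp
    have IH: "(-1)^(n-j) * (\<Prod>i<n. (x - y i)) > 0" using Suc.IH[OF jn] Suc.prems by auto
    have neg: "x - y n < 0" using Suc.prems jn by auto
    have "(-1)^(Suc n - j) * (\<Prod>i<Suc n. (x - y i)) = ((-1)^(n-j) * (\<Prod>i<n. (x - y i))) * (- (x - y n))"
      using jn by (simp add: Suc_diff_le algebra_simps)
    also have "\<dots> > 0" by (rule mult_pos_pos) (use IH neg in auto)
    finally show ?thesis .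
  qed
qed

lemma factor_roots:
  fixes p :: "real poly"
  assumes "degree p = n" "\<forall>i. Suc i < n \<longrightarrow> y i < y (Suc i)" "\<forall>i<n. poly p (y i) = 0"
  shows "p = smult (lead_coeff p) (\<Prod>i<n. [:- y i, 1:])"
  using assms
proof (induction n arbitrary: p)
  case 0
  then show ?case by (metis degree_0_id lessThan_0 prod.empty smult_one)
next
  case (Suc n)
  obtain p' where pp: "p = [:- y n, 1:] * p'" using Suc.prems(3) poly_eq_0_iff_dvd by (metis dvdE lessI)
  have p'0: "p' \<noteq> 0" using pp Suc.prems(1) by auto
  have dp': "degree p' = n" using Suc.prems(1) unfolding pp using p'0 by (subst (asm) degree_mult_eq) auto
  have mono: "y i < y n" if "i < n" for i
    using chain_mono[of "n" y i n] Suc.prems(2) that by auto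
  have roots: "\<forall>i<n. poly p' (y i) = 0"
  proof (intro allI impI)
    fix i assume "i < n"
    then have "poly p (y i) = 0" "y i - y n \<noteq> 0" using Suc.prems(3) mono[of i] by auto
    then show "poly p' (y i) = 0" unfolding pp by simp
  qed
  have IH: "p' = smult (lead_coeff p') (\<Prod>i<n. [:- y i, 1:])"
    using Suc.IH[OF dp' _ roots] Suc.prems(2) by auto
  have L: "lead_coeff p = lead_coeff p'" unfolding pp lead_coeff_mult by simp
  show ?case unfolding L by (subst pp, subst IH) (simp add: mult.commute mult.left_commute)
qed

lemma sign_poly_roots:
  fixes p :: "real poly"
  assumes "degree p = n" "\<forall>i. Suc i < n \<longrightarrow> y i < y (Suc i)" "\<forall>i<n. poly p (y i) = 0"
    "lead_coeff p > 0" "j \<le> n" "\<forall>i<j. y i < x" "\<forall>i. j \<le> i \<and> i < n \<longrightarrow> x < y i"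
  shows "(-1)^(n-j) * poly p x > 0"
proof -
  have "poly p x = lead_coeff p * (\<Prod>i<n. (x - y i))"
    by (subst factor_roots[OF assms(1-3)]) (simp add: poly_prod)
  then show ?thesis using sign_prod[OF assms(5-7)] assms(4) by (simp add: mult.left_commute)
qed


section \<open>Interlacing of Legendre zeros\<close>

lemma legendre_interlace:
  "n \<ge> 1 \<Longrightarrow> \<exists>y. (\<forall>i. Suc i < n \<longrightarrow> y i < y (Suc i)) \<and>
     (\<forall>i<n. -1 < y i \<and> y i < 1 \<and> poly (legendre n) (y i) = 0 \<and>
        (-1)^(n-1-i) * poly (legendre (n-1)) (y i) > 0)"
proof (induction n rule: nat_induct_at_least)
  case base
  show ?case by (intro exI[of _ "\<lambda>_. 0"]) simp
next
  case (Suc n)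
  then obtain y where ymon: "\<forall>i. Suc i < n \<longrightarrow> y i < y (Suc i)"
    and yp: "\<forall>i<n. -1 < y i \<and> y i < 1 \<and> poly (legendre n) (y i) = 0 \<and>
        (-1)^(n-1-i) * poly (legendre (n-1)) (y i) > 0" by blast
  obtain m where nm: "n = Suc m" using Suc.hyps by (cases n) auto
  have ymono: "y i < y j" if "i < j" "j < n" for i j
    using chain_mono[of "n-1" y i j] ymon that by auto
  have ymono': "y i \<le> y j" if "i \<le> j" "j < n" for i j
    using ymono[of i j] that by (cases "i = j") auto
  define u where "u k = (if k = 0 then -1 else if k \<le> n then y (k-1) else 1)" for k
  have ub: "-1 \<le> u k \<and> u k \<le> 1" for k
    using yp unfolding u_def by (auto simp: less_imp_le)
  have sgn: "\<forall>k\<le>Suc n. (-1)^(Suc n - k) * poly (legendre (Suc n)) (u k) > 0"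
  proof (intro allI impI)
    fix k assume k: "k \<le> Suc n"
    consider "k = 0" | "k = Suc n" | "1 \<le> k" "k \<le> n" using k by linarith
    then show "(-1)^(Suc n - k) * poly (legendre (Suc n)) (u k) > 0"
    proof cases
      case 1
      then show ?thesis using legendre_pm1[of "Suc n"] unfolding u_def
        by (simp del: power_Suc add: power_mult_distrib[symmetric])
    next
      case 2
      then show ?thesis using legendre_pm1[of "Suc n"] unfolding u_def by simp
    next
      case 3
      then have uk: "u k = y (k-1)" unfolding u_def by simp
      have yk: "poly (legendre n) (y (k-1)) = 0" "(-1)^(n-1-(k-1)) * poly (legendre (n-1)) (y (k-1)) > 0"
        using yp[rule_format, of "k-1"] 3 by auto
      have val: "poly (legendre (Suc n)) (y (k-1)) = - (real (m+1) / real (m+2)) * poly (legendre m) (y (k-1))"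
        using yk(1) unfolding nm legendre_Suc_Suc_poly by (simp add: field_simps)
      have e: "(-1::real)^(Suc n - k) = - ((-1)^(n-1-(k-1)))"
        using 3 by (simp add: Suc_diff_le)
      have "(-1)^(Suc n - k) * poly (legendre (Suc n)) (u k)
           = (real (m+1) / real (m+2)) * ((-1)^(n-1-(k-1)) * poly (legendre m) (y (k-1)))"
        unfolding uk val e by (simp add: field_simps)
      also have "\<dots> > 0" by (rule mult_pos_pos) (use yk(2) nm in auto)
      finally show ?thesis .
    qed
  qed
  have umono: "\<forall>k. Suc k \<le> Suc n \<longrightarrow> u k < u (Suc k)"
  proof (intro allI impI)
    fix k assume k: "Suc k \<le> Suc n"
    consider "k = 0" | "k = n" "k \<noteq> 0" | "1 \<le> k" "k < n" using k by linarith
    then show "u k < u (Suc k)"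
    proof cases
      case 1 then show ?thesis unfolding u_def using yp Suc.hyps by auto
    next
      case 2 then show ?thesis unfolding u_def using yp Suc.hyps by auto
    next
      case 3 then show ?thesis unfolding u_def using ymono[of "k-1" k] by auto
    qed
  qed
  have "\<forall>k. \<exists>x. Suc k \<le> Suc n \<longrightarrow> u k < x \<and> x < u (Suc k) \<and> poly (legendre (Suc n)) x = 0"
  proof (intro allI)
    fix k
    show "\<exists>x. Suc k \<le> Suc n \<longrightarrow> u k < x \<and> x < u (Suc k) \<and> poly (legendre (Suc n)) x = 0"
    proof (cases "Suc k \<le> Suc n")
      case True
      have "poly (legendre (Suc n)) (u k) * poly (legendre (Suc n)) (u (Suc k)) < 0"
        using alt_from_sign[of "Suc n" "\<lambda>k. poly (legendre (Suc n)) (u k)" k] sgn True by auto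
      then show ?thesis using poly_IVT umono True by metis
    qed auto
  qed
  then obtain w where w: "\<And>k. Suc k \<le> Suc n \<Longrightarrow> u k < w k \<and> w k < u (Suc k) \<and> poly (legendre (Suc n)) (w k) = 0"
    by metis
  show ?case
  proof (intro exI[of _ w] conjI allI impI)
    fix i assume "Suc i < Suc n"
    then show "w i < w (Suc i)" using w[of i] w[of "Suc i"] by auto
  next
    fix i assume i: "i < Suc n"
    show "-1 < w i" using w[of i] ub[of i] i by auto
    show "w i < 1" using w[of i] ub[of "Suc i"] i by auto
    show "poly (legendre (Suc n)) (w i) = 0" using w[of i] i by auto
    have "(-1)^(n-i) * poly (legendre n) (w i) > 0"
    proof (rule sign_poly_roots[where y = y])
      show "degree (legendre n) = n" by simp
      show "\<forall>i. Suc i < n \<longrightarrow> y i < y (Suc i)" by (fact ymon)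
      show "\<forall>i<n. poly (legendre n) (y i) = 0" using yp by auto
      show "lead_coeff (legendre n) > 0" using kap_pos by simp
      show "i \<le> n" using i by simp
      show "\<forall>j<i. y j < w i"
      proof (intro allI impI)
        fix j assume j: "j < i"
        have "y j \<le> y (i-1)" using ymono'[of j "i-1"] j i by auto
        also have "y (i-1) = u i" unfolding u_def using j i by auto
        also have "\<dots> < w i" using w[of i] i by auto
        finally show "y j < w i" .
      qed
      show "\<forall>j. i \<le> j \<and> j < n \<longrightarrow> w i < y j"
      proof (intro allI impI)
        fix j assume j: "i \<le> j \<and> j < n"
        have "w i < u (Suc i)" using w[of i] i by auto
        also have "u (Suc i) = y i" unfolding u_def using j by auto
        also have "\<dots> \<le> y j" using ymono'[of i j] j by auto
        finally show "w i < y j" .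
      qed
    qed
    then show "(-1)^(Suc n - 1 - i) * poly (legendre (Suc n - 1)) (w i) > 0" by simp
  qed
qed

lemma legendre_alt:
  "\<exists>z. (\<forall>i. Suc i \<le> m \<longrightarrow> z i < z (Suc i)) \<and> (\<forall>i\<le>m. (-1)^(m-i) * poly (legendre m) (z i) > 0)"
proof -
  obtain y where "\<forall>i. Suc i < Suc m \<longrightarrow> y i < y (Suc i)"
    "\<forall>i<Suc m. (-1)^(Suc m-1-i) * poly (legendre (Suc m-1)) (y i) > 0"
    using legendre_interlace[of "Suc m"] by auto
  then show ?thesis by (intro exI[of _ y]) auto
qed


lemma small_mult:
  fixes h f :: "nat \<Rightarrow> real"
  assumes "\<forall>i\<le>m. h i \<noteq> 0"
  shows "\<exists>\<tau>>0. \<forall>t. \<bar>t\<bar> \<le> \<tau> \<longrightarrow> (\<forall>i\<le>m. \<bar>t * f i\<bar> < \<bar>h i\<bar>)"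
proof -
  define \<mu> where "\<mu> = Min ((\<lambda>i. \<bar>h i\<bar>) ` {..m})"
  define M where "M = Max ((\<lambda>i. \<bar>f i\<bar>) ` {..m})"
  have \<mu>le: "\<mu> \<le> \<bar>h i\<bar>" if "i \<le> m" for i unfolding \<mu>_def using that by (intro Min_le) auto
  have Mge: "\<bar>f i\<bar> \<le> M" if "i \<le> m" for i unfolding M_def using that by (intro Max_ge) auto
  have \<mu>pos: "\<mu> > 0"
  proof -
    have "\<mu> \<in> (\<lambda>i. \<bar>h i\<bar>) ` {..m}" unfolding \<mu>_def by (intro Min_in) auto
    then show ?thesis using assms by auto
  qed
  have M0: "M \<ge> 0" using Mge[of 0] by simp
  define \<tau> where "\<tau> = \<mu> / (M + 1)"
  have \<tau>pos: "\<tau> > 0" unfolding \<tau>_def using \<mu>pos M0 by simp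
  have "\<tau> * M < \<mu>" unfolding \<tau>_def using \<mu>pos M0 by (simp add: field_simps)
  show ?thesis
  proof (intro exI[of _ \<tau>] conjI allI impI)
    fix t i assume t: "\<bar>t\<bar> \<le> \<tau>" and i: "i \<le> m"
    have "\<bar>t * f i\<bar> = \<bar>t\<bar> * \<bar>f i\<bar>" by (simp add: abs_mult)
    also have "\<dots> \<le> \<tau> * M" using t Mge[OF i] M0 by (intro mult_mono) auto
    also have "\<dots> < \<mu>" by fact
    also have "\<dots> \<le> \<bar>h i\<bar>" using \<mu>le[OF i] .
    finally show "\<bar>t * f i\<bar> < \<bar>h i\<bar>" .
  qed (fact \<tau>pos)
qed

lemma pert_sign:
  fixes h d :: "nat \<Rightarrow> real"
  assumes "\<forall>i\<le>m. (-1)^(m-i) * h i > 0" "\<forall>i\<le>m. \<bar>d i\<bar> < \<bar>h i\<bar>"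
  shows "\<forall>i\<le>m. (-1)^(m-i) * (h i + d i) > 0"
proof (intro allI impI)
  fix i assume i: "i \<le> m"
  let ?s = "(-1::real)^(m-i)"
  have as: "\<bar>?s\<bar> = 1" by (simp add: power_abs)
  have "\<bar>h i\<bar> = \<bar>?s * h i\<bar>" using as by (simp add: abs_mult)
  also have "\<dots> = ?s * h i" using assms(1) i by auto
  finally have hi: "\<bar>h i\<bar> = ?s * h i" .
  have "\<bar>?s * d i\<bar> = \<bar>d i\<bar>" using as by (simp add: abs_mult)
  then have dd: "?s * d i \<ge> - \<bar>d i\<bar>" by linarith
  have lt: "\<bar>d i\<bar> < \<bar>h i\<bar>" using assms(2) i by auto
  have "?s * (h i + d i) = ?s * h i + ?s * d i" by (simp add: algebra_simps)
  then show "?s * (h i + d i) > 0" using hi dd lt by linarith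
qed

lemma far_point:
  fixes q :: "real poly"
  assumes "lead_coeff q > 0"
  shows "\<exists>w<a. (-1)^(degree q) * poly q w > 0"
proof -
  let ?d = "degree q"
  define q' where "q' = smult ((-1)^?d) (pcompose q [:0,-1:])"
  have pq: "poly q' x = (-1)^?d * poly q (-x)" for x unfolding q'_def by (simp add: poly_pcompose)
  have "lead_coeff q' = (-1)^?d * (lead_coeff q * (-1)^?d)"
    unfolding q'_def lead_coeff_smult by (subst lead_coeff_comp) auto
  also have "\<dots> = lead_coeff q" by (simp add: power_mult_distrib[symmetric])
  finally have lq: "lead_coeff q' = lead_coeff q" .
  obtain N where N: "\<forall>x\<ge>N. lead_coeff q' \<le> poly q' x" using poly_pinfty_gt_lc[of q'] lq assms by auto
  define x where "x = max N (\<bar>a\<bar> + 1)"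
  have "lead_coeff q \<le> poly q' x" using N lq unfolding x_def by auto
  then have "(-1)^?d * poly q (-x) > 0" using assms pq by simp
  moreover have "-x < a" unfolding x_def by auto
  ultimately show ?thesis by blast
qed

lemma sum3:
  fixes f :: "nat \<Rightarrow> real"
  assumes "n \<le> N" "m \<le> N" "j \<le> N" "n \<noteq> m" "n \<noteq> j" "m \<noteq> j"
  shows "(\<Sum>k\<le>N. smult (f k * (if k = n then A else if k = m then B else if k = j then C else 0)) (legendre k))
    = smult (f n * A) (legendre n) + smult (f m * B) (legendre m) + smult (f j * C) (legendre j)"
proof -
  have "(\<Sum>k\<le>N. smult (f k * (if k = n then A else if k = m then B else if k = j then C else 0)) (legendre k))
    = (\<Sum>k\<le>N. (if k = n then smult (f n * A) (legendre n) else 0) + (if k = m then smult (f m * B) (legendre m) else 0)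
          + (if k = j then smult (f j * C) (legendre j) else 0))"
    using assms by (intro sum.cong) auto
  also have "\<dots> = smult (f n * A) (legendre n) + smult (f m * B) (legendre m) + smult (f j * C) (legendre j)"
    using assms by (simp add: sum.distrib)
  finally show ?thesis .
qed

lemma lin_pow_B: "coeff ([:-r,1:] ^ Suc n) n = - (real n + 1) * r"
proof (induction n)
  case 0 then show ?case by simp
next
  case (Suc n)
  have "coeff ([:-r,1:] ^ Suc (Suc n)) (Suc n) = coeff ([:-r,1:] ^ Suc n) n - r * coeff ([:-r,1:] ^ Suc n) (Suc n)"
    by (subst power_Suc, subst coeff_lin_mult) simp
  also have "\<dots> = - (real (Suc n) + 1) * r" unfolding Suc.IH coeff_linear_power by (simp add: algebra_simps)
  finally show ?case .
qed

lemma lin_pow_C: "coeff ([:-r,1:] ^ Suc (Suc n)) n = (real n + 2) * (real n + 1) / 2 * r^2"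
proof (induction n)
  case 0
  have "coeff ([:-r,1:] ^ Suc (Suc 0)) 0 = - r * coeff ([:-r,1:] ^ Suc 0) 0"
    by (subst power_Suc, subst coeff_lin_mult) simp
  then show ?case using lin_pow_B[of r 0] by (simp add: power2_eq_square)
next
  case (Suc n)
  have "coeff ([:-r,1:] ^ Suc (Suc (Suc n))) (Suc n) = coeff ([:-r,1:] ^ Suc (Suc n)) n - r * coeff ([:-r,1:] ^ Suc (Suc n)) (Suc n)"
    by (subst power_Suc, subst coeff_lin_mult) simp
  also have "\<dots> = (real (Suc n) + 2) * (real (Suc n) + 1) / 2 * r^2"
    unfolding Suc.IH lin_pow_B by (simp add: field_simps power2_eq_square)
  finally show ?case .
qed


section \<open>Necessary conditions\<close>

lemma turan_ineq:
  assumes LMS: "legendre_multiplier_sequence \<gamma>" and g: "\<gamma> (Suc (Suc m)) > 0"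
  defines "\<sigma> \<equiv> - coeff (legendre (Suc (Suc m))) m / kap (Suc (Suc m))"
  shows "(real (Suc (Suc m)) - 1) * ((real m + 2) * r * \<gamma> (Suc m))^2 \<ge>
     2 * real (Suc (Suc m)) * \<gamma> (Suc (Suc m)) *
       (\<gamma> m * ((real m + 2) * (real m + 1) / 2 * r^2 + \<sigma>) - \<gamma> (Suc (Suc m)) * \<sigma>)"
proof -
  let ?N = "Suc (Suc m)"
  define p where "p = [:-r,1:] ^ ?N"
  have dp: "degree p = ?N" unfolding p_def by (rule degree_linear_power)
  obtain a where pa: "p = (\<Sum>k\<le>?N. smult (a k) (legendre k))" using legendre_span[of p ?N] dp by auto
  have c1: "a ?N * kap ?N = 1" using coeff_sum_top3(1)[of a m] coeff_linear_power[of "-r" ?N] unfolding p_def[symmetric] pa[symmetric] by simp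
  have c2: "a (Suc m) * kap (Suc m) = - (real m + 2) * r"
    using coeff_sum_top3(2)[of a m] lin_pow_B[of r "Suc m"] unfolding p_def[symmetric] pa[symmetric] by (simp add: algebra_simps)
  have c3: "a m * kap m + a ?N * coeff (legendre ?N) m = (real m + 2) * (real m + 1) / 2 * r^2"
    using coeff_sum_top3(3)[of a m] lin_pow_C[of r m] unfolding p_def[symmetric] pa[symmetric] by simp
  have aN: "a ?N = 1 / kap ?N" using c1 kap_pos[of ?N] by (simp add: field_simps)
  have aNc: "a ?N * coeff (legendre ?N) m = - \<sigma>" unfolding aN \<sigma>_def by simp
  define q where "q = (\<Sum>k\<le>?N. smult (\<gamma> k * a k) (legendre k))"
  have rq: "real_rooted q" using LMS rr_lin_pow[of r ?N] unfolding legendre_multiplier_sequence_def q_def p_def[symmetric] pa by blast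
  have q1: "coeff q ?N = \<gamma> ?N" using coeff_sum_top3(1)[of "\<lambda>k. \<gamma> k * a k" m] c1 unfolding q_def[symmetric]
    by (simp add: mult.assoc)
  have q2: "coeff q (Suc m) = - (real m + 2) * r * \<gamma> (Suc m)"
    using coeff_sum_top3(2)[of "\<lambda>k. \<gamma> k * a k" m] c2 unfolding q_def[symmetric] by (simp add: algebra_simps)
  have q3: "coeff q m = \<gamma> m * ((real m + 2) * (real m + 1) / 2 * r^2 + \<sigma>) - \<gamma> ?N * \<sigma>"
  proof -
    have "coeff q m = \<gamma> m * (a m * kap m) + \<gamma> ?N * (a ?N * coeff (legendre ?N) m)"
      using coeff_sum_top3(3)[of "\<lambda>k. \<gamma> k * a k" m] unfolding q_def[symmetric] by (simp add: algebra_simps)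
    also have "a m * kap m = (real m + 2) * (real m + 1) / 2 * r^2 + \<sigma>" using c3 aNc by linarith
    finally show ?thesis unfolding aNc by (simp add: algebra_simps)
  qed
  have dq: "degree q = ?N"
  proof (rule order.antisym)
    show "degree q \<le> ?N" using coeff_sum_top3(4)[of "\<lambda>k. \<gamma> k * a k" m] unfolding q_def .
    show "?N \<le> degree q" using q1 g by (intro le_degree) auto
  qed
  have q0: "q \<noteq> 0" using q1 g by auto
  have "t1 q = coeff q (Suc m)" "t2 q = coeff q m" "lead_coeff q = \<gamma> ?N"
    unfolding t1_def t2_def dq using q1 by auto
  moreover have sq: "(- real m - 2)^2 = (real m + 2)^2" by (simp add: power2_eq_square algebra_simps)
  ultimately show ?thesis using newton_bound[OF rq q0] unfolding dq q2 q3 by (simp add: power_mult_distrib sq)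
qed

lemma turan_conseq:
  assumes LMS: "legendre_multiplier_sequence \<gamma>" and g: "\<gamma> (Suc (Suc m)) > 0"
    and nn: "\<And>k. \<gamma> k \<ge> 0"
  shows "\<gamma> m \<le> \<gamma> (Suc (Suc m))" and "\<gamma> (Suc (Suc m)) * \<gamma> m \<le> \<gamma> (Suc m) ^ 2"
proof -
  let ?N = "Suc (Suc m)"
  define \<sigma> where "\<sigma> = - coeff (legendre (Suc (Suc m))) m / kap (Suc (Suc m))"
  have \<sigma>pos: "\<sigma> > 0" unfolding \<sigma>_def using coeff_leg_2[of m] kap_pos[of ?N] by (simp add: divide_neg_pos)
  have I: "\<And>r. (real ?N - 1) * ((real m + 2) * r * \<gamma> (Suc m))^2 \<ge>
     2 * real ?N * \<gamma> ?N * (\<gamma> m * ((real m + 2) * (real m + 1) / 2 * r^2 + \<sigma>) - \<gamma> ?N * \<sigma>)"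
    using turan_ineq[OF LMS g] unfolding \<sigma>_def by blast
  have "0 \<ge> 2 * real ?N * \<gamma> ?N * (\<gamma> m * \<sigma> - \<gamma> ?N * \<sigma>)" using I[of 0] by simp
  then have "\<gamma> m * \<sigma> - \<gamma> ?N * \<sigma> \<le> 0" using g by (simp add: mult_le_0_iff zero_less_mult_iff)
  then show le: "\<gamma> m \<le> \<gamma> ?N" using \<sigma>pos by (simp add: algebra_simps mult_le_cancel_right)
  show "\<gamma> ?N * \<gamma> m \<le> \<gamma> (Suc m) ^ 2"
  proof (rule ccontr)
    assume "\<not> ?thesis"
    then have X: "\<gamma> (Suc m) ^ 2 - \<gamma> ?N * \<gamma> m < 0" by simp
    define K where "K = (real m + 2)^2 * (real m + 1)"
    have K: "K > 0" unfolding K_def by simp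
    define r where "r = sqrt ((2 * real ?N * \<gamma> ?N ^ 2 * \<sigma> + 1) / (K * (\<gamma> ?N * \<gamma> m - \<gamma> (Suc m) ^ 2)))"
    have r2: "r^2 = (2 * real ?N * \<gamma> ?N ^ 2 * \<sigma> + 1) / (K * (\<gamma> ?N * \<gamma> m - \<gamma> (Suc m) ^ 2))"
      unfolding r_def using K X \<sigma>pos g by (intro real_sqrt_pow2) (auto intro!: divide_nonneg_pos add_nonneg_nonneg mult_nonneg_nonneg)
    have expand: "(real ?N - 1) * ((real m + 2) * r * \<gamma> (Suc m))^2 -
       2 * real ?N * \<gamma> ?N * (\<gamma> m * ((real m + 2) * (real m + 1) / 2 * r^2 + \<sigma>) - \<gamma> ?N * \<sigma>)
       = K * r^2 * (\<gamma> (Suc m) ^ 2 - \<gamma> ?N * \<gamma> m) - 2 * real ?N * \<gamma> ?N * \<sigma> * (\<gamma> m - \<gamma> ?N)"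
      unfolding K_def by (simp add: algebra_simps power2_eq_square)
    have "K * r^2 * (\<gamma> (Suc m) ^ 2 - \<gamma> ?N * \<gamma> m) = - (2 * real ?N * \<gamma> ?N ^ 2 * \<sigma> + 1)"
      unfolding r2 using K X by (simp add: field_simps)
    moreover have "2 * real ?N * \<gamma> ?N * \<sigma> * (\<gamma> m - \<gamma> ?N) \<ge> - 2 * real ?N * \<gamma> ?N ^ 2 * \<sigma>"
    proof -
      have "\<gamma> m - \<gamma> ?N \<ge> - \<gamma> ?N" using nn[of m] by simp
      then have "(2 * real ?N * \<gamma> ?N * \<sigma>) * (\<gamma> m - \<gamma> ?N) \<ge> (2 * real ?N * \<gamma> ?N * \<sigma>) * (- \<gamma> ?N)"
        using g \<sigma>pos by (intro mult_left_mono) auto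
      then show ?thesis by (simp add: power2_eq_square algebra_simps)
    qed
    ultimately have "(real ?N - 1) * ((real m + 2) * r * \<gamma> (Suc m))^2 -
       2 * real ?N * \<gamma> ?N * (\<gamma> m * ((real m + 2) * (real m + 1) / 2 * r^2 + \<sigma>) - \<gamma> ?N * \<sigma>) < 0"
      unfolding expand by linarith
    then show False using I[of r] by linarith
  qed
qed


lemma alt_poly_rr:
  fixes p :: "real poly"
  assumes "degree p = N" "\<forall>i. Suc i \<le> N \<longrightarrow> z i < z (Suc i)" "\<forall>i\<le>N. (-1)^(N-i) * poly p (z i) > 0"
  shows "real_rooted p"
proof (rule alt_rr[OF assms(1,2)], intro allI impI)
  fix i assume "Suc i \<le> N"
  then show "poly p (z i) * poly p (z (Suc i)) < 0"
    using alt_from_sign[of N "\<lambda>i. poly p (z i)" i] assms(3) by auto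
qed



lemma gap_zero:
  assumes LMS: "legendre_multiplier_sequence \<gamma>"
    and gN: "\<gamma> N = 0" and ac: "a + 2 \<le> c" and cN: "c < N" and ga: "\<gamma> a > 0" and gc: "\<gamma> c > 0"
  shows False
proof -
  define c0 where "c0 = c - 2"
  have c0: "c = Suc (Suc c0)" using ac unfolding c0_def by simp
  obtain z where zm: "\<forall>i. Suc i \<le> N \<longrightarrow> z i < z (Suc i)"
    and zs: "\<forall>i\<le>N. (-1)^(N-i) * poly (legendre N) (z i) > 0"
    using legendre_alt[of N] by blast
  define cc where "cc = coeff (legendre c) c0"
  define B where "B = kap c * (1 + sqrt (- 2 * cc / kap c)) ^ c"
  define \<beta> where "\<beta> = (if a + 2 = c then (1 - cc) / kap a else (B + \<bar>coeff (legendre c) a\<bar> + 1) / kap a)"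
  define f where "f = smult (1 / \<gamma> c) (legendre c) + smult (\<beta> / \<gamma> a) (legendre a)"
  have hz: "\<forall>i\<le>N. poly (legendre N) (z i) \<noteq> 0" using zs by fastforce
  obtain \<tau> where \<tau>: "\<tau> > 0" "\<forall>t. \<bar>t\<bar> \<le> \<tau> \<longrightarrow> (\<forall>i\<le>N. \<bar>t * poly f (z i)\<bar> < \<bar>poly (legendre N) (z i)\<bar>)"
    using small_mult[OF hz, of "\<lambda>i. poly f (z i)"] by blast
  define p where "p = legendre N + smult \<tau> f"
  have ps: "\<forall>i\<le>N. (-1)^(N-i) * poly p (z i) > 0"
    using pert_sign[OF zs, of "\<lambda>i. \<tau> * poly f (z i)"] \<tau> unfolding p_def by simp
  have df: "degree (smult \<tau> f) < N"
  proof -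
    have "degree f \<le> c" unfolding f_def using ac
      by (intro degree_add_le) (auto intro: order.trans[OF degree_smult_le])
    then show ?thesis using cN by (meson degree_smult_le le_less_trans order.trans)
  qed
  have dp: "degree p = N" unfolding p_def using df by (subst degree_add_eq_left) auto
  have rp: "real_rooted p" by (rule alt_poly_rr[OF dp zm ps])
  define A where "A k = (if k = N then 1 else if k = c then \<tau> / \<gamma> c else if k = a then \<tau> * \<beta> / \<gamma> a else 0)" for k
  have neq: "N \<noteq> c" "N \<noteq> a" "c \<noteq> a" using ac cN by auto
  have sumA: "(\<Sum>k\<le>N. smult (f' k * A k) (legendre k)) =
     smult (f' N * 1) (legendre N) + smult (f' c * (\<tau> / \<gamma> c)) (legendre c) + smult (f' a * (\<tau> * \<beta> / \<gamma> a)) (legendre a)" for f'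
    unfolding A_def using sum3[of N N c a f' 1 "\<tau> / \<gamma> c" "\<tau> * \<beta> / \<gamma> a"] neq ac cN by auto
  have "p = (\<Sum>k\<le>N. smult (1 * A k) (legendre k))"
    unfolding sumA p_def f_def by (simp add: smult_add_right)
  then have "real_rooted (\<Sum>k\<le>N. smult (\<gamma> k * A k) (legendre k))"
    using LMS rp unfolding legendre_multiplier_sequence_def by auto
  also have "(\<Sum>k\<le>N. smult (\<gamma> k * A k) (legendre k)) = smult \<tau> (legendre c + smult \<beta> (legendre a))"
    unfolding sumA gN using ga gc by (simp add: smult_add_right)
  finally have rq0: "real_rooted (smult \<tau> (legendre c + smult \<beta> (legendre a)))" .
  have rq: "real_rooted (legendre c + smult \<beta> (legendre a))"
    by (rule rr_smult[OF _ rq0]) (use \<tau>(1) in simp)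
  define q where "q = legendre c + smult \<beta> (legendre a)"
  have dq: "degree q = c" unfolding q_def using ac
    by (subst degree_add_eq_left) (auto intro: le_less_trans[OF degree_smult_le])
  have q0: "q \<noteq> 0" using dq ac by auto
  have cq: "coeff q i = coeff (legendre c) i + \<beta> * coeff (legendre a) i" for i unfolding q_def by simp
  have Lq: "lead_coeff q = kap c" unfolding dq cq using ac by (simp add: coeff_leg_hi)
  have T1: "t1 q = 0" unfolding t1_def dq cq c0 using ac c0 by (simp add: coeff_leg_1 coeff_leg_hi)
  have T2: "t2 q = cc + \<beta> * coeff (legendre a) c0" unfolding t2_def dq cq c0 cc_def by simp
  note NB = newton_bound[OF rq[folded q_def] q0]
  show False
  proof (cases "a + 2 = c")
    case True
    then have "a = c0" using c0 by simp
    then have "t2 q = 1" unfolding T2 \<beta>_def using True kap_pos[of a] by simp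
    then show False using NB unfolding T1 Lq unfolding dq using kap_pos[of c] c0 by (simp add: mult_le_0_iff)
  next
    case False
    then have ac3: "a < c0" using ac c0 by simp
    have "t2 q = cc" unfolding T2 using ac3 by (simp add: coeff_leg_hi)
    then have Qq: "Qv q = - 2 * cc / kap c" unfolding Qv_def T1 Lq using kap_pos[of c]
      by (simp add: power2_eq_square)
    have "\<bar>coeff q a\<bar> \<le> B" using NB unfolding Qq Lq unfolding dq B_def using kap_pos[of c] by simp
    moreover have "coeff q a = coeff (legendre c) a + B + \<bar>coeff (legendre c) a\<bar> + 1"
      unfolding cq \<beta>_def using False kap_pos[of a] by simp
    ultimately show False by linarith
  qed
qed


lemma gap_one:
  assumes LMS: "legendre_multiplier_sequence \<gamma>"
    and gn: "\<gamma> (Suc (Suc l)) > 0" and gm: "\<gamma> (Suc l) = 0" and jl: "Suc j \<le> l" and gj: "\<gamma> j > 0"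
  shows False
proof -
  define n where "n = Suc (Suc l)"
  define m where "m = Suc l"
  obtain z where zm: "\<forall>i. Suc i \<le> m \<longrightarrow> z i < z (Suc i)"
    and zs: "\<forall>i\<le>m. (-1)^(m-i) * poly (legendre m) (z i) > 0"
    using legendre_alt[of m] by blast
  have hz: "\<forall>i\<le>m. poly (legendre m) (z i) \<noteq> 0" using zs by fastforce
  obtain t where t: "t > 0" "\<forall>t'. \<bar>t'\<bar> \<le> t \<longrightarrow> (\<forall>i\<le>m. \<bar>t' * poly (legendre j) (z i)\<bar> < \<bar>poly (legendre m) (z i)\<bar>)"
    using small_mult[OF hz, of "\<lambda>i. poly (legendre j) (z i)"] by blast
  define g where "g = legendre m + smult t (legendre j)"
  have gs: "\<forall>i\<le>m. (-1)^(m-i) * poly g (z i) > 0"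
    using pert_sign[OF zs, of "\<lambda>i. t * poly (legendre j) (z i)"] t unfolding g_def by simp
  have hg: "\<forall>i\<le>m. poly g (z i) \<noteq> 0" using gs by fastforce
  obtain \<tau> where \<tau>: "\<tau> > 0" "\<forall>t'. \<bar>t'\<bar> \<le> \<tau> \<longrightarrow> (\<forall>i\<le>m. \<bar>t' * poly (legendre n) (z i)\<bar> < \<bar>poly g (z i)\<bar>)"
    using small_mult[OF hg, of "\<lambda>i. poly (legendre n) (z i)"] by blast
  define cn where "cn = coeff (legendre n) l"
  define Q0 where "Q0 = - 2 * cn / kap n"
  define Bn where "Bn = kap n * (1 + sqrt Q0) ^ n"
  define C where "C = \<gamma> n * (\<bar>coeff (legendre n) j\<bar> + Bn)"
  define D where "D = t * \<gamma> j * kap j"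
  have Dpos: "D > 0" unfolding D_def using t gj kap_pos[of j] by simp
  have Q0p: "Q0 \<ge> 0" unfolding Q0_def cn_def n_def using coeff_leg_2[of l] kap_pos[of "Suc (Suc l)"]
    by (simp add: divide_nonpos_pos)
  have C0: "C \<ge> 0" unfolding C_def Bn_def using gn kap_pos[of n] Q0p unfolding n_def by simp
  define \<epsilon> where "\<epsilon> = min \<tau> (D / (C + 1))"
  have \<epsilon>pos: "\<epsilon> > 0" unfolding \<epsilon>_def using \<tau> Dpos C0 by simp
  define p where "p = smult \<epsilon> (legendre n) + g"
  have ps: "\<forall>i\<le>m. (-1)^(m-i) * poly p (z i) > 0"
  proof -
    have "\<forall>i\<le>m. (-1)^(m-i) * (poly g (z i) + \<epsilon> * poly (legendre n) (z i)) > 0"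
      using pert_sign[OF gs, of "\<lambda>i. \<epsilon> * poly (legendre n) (z i)"] \<tau> \<epsilon>pos
      unfolding \<epsilon>_def by (simp add: abs_of_pos)
    then show ?thesis unfolding p_def by (simp add: add.commute)
  qed
  have dg: "degree g < n"
  proof -
    have "degree g \<le> m" unfolding g_def using jl unfolding m_def
      by (intro degree_add_le) (auto intro: order.trans[OF degree_smult_le])
    then show ?thesis unfolding m_def n_def by simp
  qed
  have dp: "degree p = n" unfolding p_def using dg \<epsilon>pos by (subst degree_add_eq_left) auto
  have lp: "lead_coeff p = \<epsilon> * kap n" unfolding dp unfolding p_def using dg by (simp add: coeff_eq_0)
  obtain w where w: "w < z 0" "(-1)^n * poly p w > 0"
    using far_point[of p "z 0"] lp \<epsilon>pos kap_pos[of n] dp by auto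
  define v where "v i = (if i = 0 then w else z (i - 1))" for i
  have vs: "\<forall>i\<le>n. (-1)^(n-i) * poly p (v i) > 0"
  proof (intro allI impI)
    fix i assume i: "i \<le> n"
    show "(-1)^(n-i) * poly p (v i) > 0"
    proof (cases i)
      case 0 then show ?thesis using w unfolding v_def by simp
    next
      case (Suc k)
      then have "k \<le> m" "n - i = m - k" using i unfolding n_def m_def by auto
      then show ?thesis using ps Suc unfolding v_def by auto
    qed
  qed
  have vm: "\<forall>i. Suc i \<le> n \<longrightarrow> v i < v (Suc i)"
  proof (intro allI impI)
    fix i assume i: "Suc i \<le> n"
    show "v i < v (Suc i)"
    proof (cases i)
      case 0 then show ?thesis using w unfolding v_def by simp
    next
      case (Suc k)
      then have "Suc k \<le> m" using i unfolding n_def m_def by auto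
      then show ?thesis using zm Suc unfolding v_def by auto
    qed
  qed
  have rp: "real_rooted p" by (rule alt_poly_rr[OF dp vm vs])
  define A where "A k = (if k = n then \<epsilon> else if k = m then 1 else if k = j then t else 0)" for k
  have neq: "n \<noteq> m" "n \<noteq> j" "m \<noteq> j" "m \<le> n" "j \<le> n" using jl unfolding n_def m_def by auto
  have sumA: "(\<Sum>k\<le>n. smult (f' k * A k) (legendre k)) =
     smult (f' n * \<epsilon>) (legendre n) + smult (f' m * 1) (legendre m) + smult (f' j * t) (legendre j)" for f'
    unfolding A_def using sum3[of n n m j f' \<epsilon> 1 t] neq by auto
  have "p = (\<Sum>k\<le>n. smult (1 * A k) (legendre k))"
    unfolding sumA p_def g_def by (simp add: add.assoc)
  then have "real_rooted (\<Sum>k\<le>n. smult (\<gamma> k * A k) (legendre k))"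
    using LMS rp unfolding legendre_multiplier_sequence_def by auto
  also have "(\<Sum>k\<le>n. smult (\<gamma> k * A k) (legendre k)) = smult (\<epsilon> * \<gamma> n) (legendre n) + smult (t * \<gamma> j) (legendre j)"
    unfolding sumA using gm unfolding m_def by (simp add: mult.commute)
  finally have rq: "real_rooted (smult (\<epsilon> * \<gamma> n) (legendre n) + smult (t * \<gamma> j) (legendre j))" .
  define q where "q = smult (\<epsilon> * \<gamma> n) (legendre n) + smult (t * \<gamma> j) (legendre j)"
  have gnn: "\<gamma> n > 0" using gn unfolding n_def .
  have dq: "degree q = n" unfolding q_def using neq \<epsilon>pos gnn
    by (subst degree_add_eq_left) (auto intro: le_less_trans[OF degree_smult_le])
  have q0: "q \<noteq> 0" using dq unfolding n_def by auto
  have cq: "coeff q i = \<epsilon> * \<gamma> n * coeff (legendre n) i + t * \<gamma> j * coeff (legendre j) i" for i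
    unfolding q_def by simp
  have Lq: "lead_coeff q = \<epsilon> * \<gamma> n * kap n" unfolding dq cq using neq by (simp add: coeff_leg_hi)
  have T1: "t1 q = 0" unfolding t1_def dq cq using jl unfolding n_def by (simp add: coeff_leg_1 coeff_leg_hi)
  have T2: "t2 q = \<epsilon> * \<gamma> n * cn" unfolding t2_def dq cq cn_def using jl unfolding n_def by (simp add: coeff_leg_hi)
  have Qq: "Qv q = Q0" unfolding Qv_def T1 Lq T2 Q0_def using \<epsilon>pos gnn kap_pos[of n]
    by (simp add: field_simps power2_eq_square)
  note NB = newton_bound[OF rq[folded q_def] q0]
  have "\<bar>coeff q j\<bar> \<le> \<epsilon> * \<gamma> n * Bn"
    using NB unfolding Qq Lq unfolding dq Bn_def using \<epsilon>pos gnn kap_pos[of n] by (simp add: abs_mult mult.assoc)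
  moreover have "coeff q j = \<epsilon> * \<gamma> n * coeff (legendre n) j + D" unfolding cq D_def by simp
  ultimately have "D \<le> \<epsilon> * \<gamma> n * Bn + \<epsilon> * \<gamma> n * \<bar>coeff (legendre n) j\<bar>"
    using abs_ge_self[of "coeff q j"] abs_ge_minus_self[of "\<epsilon> * \<gamma> n * coeff (legendre n) j"]
      \<epsilon>pos gnn by (simp add: abs_mult)
  also have "\<dots> = \<epsilon> * C" unfolding C_def by (simp add: algebra_simps)
  also have "\<dots> \<le> D / (C + 1) * C" unfolding \<epsilon>_def using C0 by (intro mult_right_mono) auto
  also have "\<dots> < D" using Dpos C0 by (simp add: field_simps)
  finally show False by simp
qed


theorem theorem3p6:
  fixes \<gamma> :: "nat \<Rightarrow> real"
  assumes "\<And>k. \<gamma> k \<ge> 0"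
    and "legendre_multiplier_sequence \<gamma>"
    and "\<not> trivial_sequence \<gamma>"
  shows "\<forall>k. \<gamma> k \<le> \<gamma> (Suc k)"
proof -
  note nn = assms(1) and LMS = assms(2) and nt = assms(3)
  have pos_succ: "\<gamma> (Suc k) > 0" if gk: "\<gamma> k > 0" for k
  proof (rule ccontr)
    assume "\<not> \<gamma> (Suc k) > 0"
    then have g1: "\<gamma> (Suc k) = 0" using nn[of "Suc k"] by simp
    show False
    proof (cases "\<exists>n > Suc k. \<gamma> n > 0")
      case True
      define n where "n = (LEAST n. n > Suc k \<and> \<gamma> n > 0)"
      have n1: "n > Suc k \<and> \<gamma> n > 0" unfolding n_def using True by (metis (mono_tags, lifting) LeastI)
      have n2: "\<gamma> n' = 0" if "Suc k < n'" "n' < n" for n'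
      proof -
        have "\<not> (n' > Suc k \<and> \<gamma> n' > 0)" using not_less_Least[of n' "\<lambda>n. n > Suc k \<and> \<gamma> n > 0"] that
          unfolding n_def by blast
        then show ?thesis using that nn[of n'] by simp
      qed
      show False
      proof (cases "n = Suc (Suc k)")
        case True
        have "\<gamma> (Suc (Suc k)) * \<gamma> k \<le> \<gamma> (Suc k) ^ 2"
          using turan_conseq(2)[OF LMS _ nn, of k] n1 True by simp
        moreover have "\<gamma> (Suc (Suc k)) * \<gamma> k > 0" using n1 True gk by simp
        ultimately show False using g1 by simp
      next
        case False
        define l where "l = n - 2"
        have nl: "n = Suc (Suc l)" and kl: "Suc k \<le> l" using n1 False unfolding l_def by auto
        have "\<gamma> (Suc l) = 0" using n2[of "Suc l"] nl kl by simp
        then show False using gap_one[OF LMS, of l k] n1 nl kl gk by simp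
      qed
    next
      case False
      then have z: "\<gamma> n = 0" if "n > k" for n
      proof (cases "n = Suc k")
        case False
        then have "n > Suc k" using that by simp
        then show ?thesis using \<open>\<not> (\<exists>n > Suc k. \<gamma> n > 0)\<close> nn[of n] by force
      qed (use g1 in simp)
      define S where "S = {i. \<gamma> i \<noteq> 0}"
      have Sk: "S \<subseteq> {..k}" unfolding S_def using z by (auto simp: not_less[symmetric])
      have fS: "finite S" using Sk finite_subset by blast
      have cS: "card S \<ge> 3" using nt fS unfolding trivial_sequence_def S_def by auto
      then have Sne: "S \<noteq> {}" by auto
      define a where "a = Min S"
      define c where "c = Max S"
      have aS: "a \<in> S" and cS': "c \<in> S" unfolding a_def c_def using fS Sne by auto
      have sub: "S \<subseteq> {a..c}" unfolding a_def c_def using fS by auto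
      have "card S \<le> card {a..c}" using sub by (intro card_mono) auto
      then have ac: "a + 2 \<le> c" using cS by simp
      have ck: "c < Suc k" using cS' Sk by auto
      have "\<gamma> a > 0" "\<gamma> c > 0" using aS cS' nn[of a] nn[of c] unfolding S_def by auto
      then show False using gap_zero[OF LMS g1 ac ck] by simp
    qed
  qed
  show ?thesis
  proof
    fix k
    show "\<gamma> k \<le> \<gamma> (Suc k)"
    proof (cases "\<gamma> k > 0")
      case False
      then show ?thesis using nn[of k] nn[of "Suc k"] by simp
    next
      case True
      have g1: "\<gamma> (Suc k) > 0" using pos_succ[OF True] .
      have g2: "\<gamma> (Suc (Suc k)) > 0" using pos_succ[OF g1] .
      have a: "\<gamma> k \<le> \<gamma> (Suc (Suc k))" and b: "\<gamma> (Suc (Suc k)) * \<gamma> k \<le> \<gamma> (Suc k) ^ 2"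
        using turan_conseq[OF LMS g2 nn] by auto
      have "\<gamma> k * \<gamma> k \<le> \<gamma> (Suc (Suc k)) * \<gamma> k" by (rule mult_right_mono[OF a]) (use True in simp)
      then have "\<gamma> k ^ 2 \<le> \<gamma> (Suc k) ^ 2" using b unfolding power2_eq_square by linarith
      then show ?thesis by (rule power2_le_imp_le) (use g1 in simp)
    qed
  qed
qed

end
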